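(* Sacks forcing $\mathbb{S}$ is weighted: for every $T\in\mathbb{S}$ there is a weight $\rho$ on $T$ such that every tree $S$ with $S\le_\rho T$ belongs to $\mathbb{S}$.
   Context: Sacks forcing $\mathbb{S}$ is the set of all perfect subtrees of $2^{<\omega}$ (trees in which every node has two incomparable extensions) ordered by inclusion. For a tree $T$ and $s\in T$, $T_s=\{t\in T:t\subseteq s\text{ or }s\subseteq t\}$. A weight on a perfect tree $T$ is a map $\rho:T\times T\to[T]^{<\omega}$ with $\rho(s,t)\subseteq T_s\setminus T_t$ for all $s,t\in T$. For a tree $S$, $S\le_\rho T$ means $S\subseteq T$ and the set of $s_0\in S$ for which there is an injective sequence $(s_n)_{n\in\omega}$ in $S_{s_0}$ (starting at $s_0$) with $\rho(s_n,s_{n+1})\subseteq S$ for all $n$ is dense in $S$. *)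

theory Defs
  imports Main "HOL-Library.Sublist"
begin

text \<open>Nodes of the full binary tree 2^{<omega} are finite bool lists; s \<subseteq> t (t extends s)
  is rendered as prefix s t.\<close>

definition is_tree :: "bool list set \<Rightarrow> bool" where
  "is_tree T \<longleftrightarrow> T \<noteq> {} \<and> (\<forall>t\<in>T. \<forall>s. prefix s t \<longrightarrow> s \<in> T)"

definition incomparable :: "bool list \<Rightarrow> bool list \<Rightarrow> bool" where
  "incomparable s t \<longleftrightarrow> \<not> prefix s t \<and> \<not> prefix t s"

definition perfect_tree :: "bool list set \<Rightarrow> bool" where
  "perfect_tree T \<longleftrightarrow> is_tree T \<and>
     (\<forall>s\<in>T. \<exists>t\<in>T. \<exists>u\<in>T. prefix s t \<and> prefix s u \<and> incomparable t u)"

definition Sacks :: "bool list set set" where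
  "Sacks = {T. perfect_tree T}"

definition restr :: "bool list set \<Rightarrow> bool list \<Rightarrow> bool list set" where
  "restr T s = {t\<in>T. prefix t s \<or> prefix s t}"

definition is_weight :: "bool list set \<Rightarrow> (bool list \<Rightarrow> bool list \<Rightarrow> bool list set) \<Rightarrow> bool" where
  "is_weight T \<rho> \<longleftrightarrow> (\<forall>s\<in>T. \<forall>t\<in>T. finite (\<rho> s t) \<and> \<rho> s t \<subseteq> restr T s - restr T t)"

definition good_nodes :: "(bool list \<Rightarrow> bool list \<Rightarrow> bool list set) \<Rightarrow> bool list set \<Rightarrow> bool list set" where
  "good_nodes \<rho> S = {s0\<in>S. \<exists>sq :: nat \<Rightarrow> bool list. inj sq \<and> sq 0 = s0 \<and>
      (\<forall>n. sq n \<in> restr S s0) \<and> (\<forall>n. \<rho> (sq n) (sq (Suc n)) \<subseteq> S)}"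

definition dense_in :: "bool list set \<Rightarrow> bool list set \<Rightarrow> bool" where
  "dense_in D S \<longleftrightarrow> (\<forall>s\<in>S. \<exists>d\<in>D. prefix s d)"

definition le_rho :: "(bool list \<Rightarrow> bool list \<Rightarrow> bool list set) \<Rightarrow> bool list set \<Rightarrow> bool list set \<Rightarrow> bool" where
  "le_rho \<rho> S T \<longleftrightarrow> S \<subseteq> T \<and> dense_in (good_nodes \<rho> S) S"

end

theory Submission
  imports Defs
begin

lemma chain_finite:
  fixes sq :: "nat \<Rightarrow> bool list"
  assumes inj: "inj sq" and a1: "prefix (sq N) t1" and a2: "prefix (sq N) t2"
    and inc: "incomparable t1 t2" and T1: "t1 \<in> T" and T2: "t2 \<in> T"
    and step: "\<And>n. n \<ge> N \<Longrightarrow> prefix (sq (Suc n)) (sq n) \<or>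
        (prefix (sq n) (sq (Suc n)) \<and> (\<forall>u\<in>T. prefix (sq n) u \<longrightarrow> \<not> incomparable u (sq (Suc n))))"
  shows False
proof -
  have inv: "prefix (sq n) t1 \<and> prefix (sq n) t2" if "n \<ge> N" for n
    using that
  proof (induction n rule: dec_induct)
    case base
    then show ?case using a1 a2 by simp
  next
    case (step n)
    from step.hyps(1) have "prefix (sq (Suc n)) (sq n) \<or>
        (prefix (sq n) (sq (Suc n)) \<and> (\<forall>u\<in>T. prefix (sq n) u \<longrightarrow> \<not> incomparable u (sq (Suc n))))"
      using assms(7) by blast
    then show ?case
    proof
      assume "prefix (sq (Suc n)) (sq n)"
      then show ?case using step.IH by (meson prefix_order.trans)
    next
      assume h: "prefix (sq n) (sq (Suc n)) \<and> (\<forall>u\<in>T. prefix (sq n) u \<longrightarrow> \<not> incomparable u (sq (Suc n)))"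
      have c1: "\<not> incomparable t1 (sq (Suc n))" using h step.IH T1 by blast
      have c2: "\<not> incomparable t2 (sq (Suc n))" using h step.IH T2 by blast
      show ?case using c1 c2 inc unfolding incomparable_def
        by (meson prefix_order.trans prefix_same_cases)
    qed
  qed
  have "sq ` {N..} \<subseteq> set (prefixes t1)"
    using inv by (auto simp: in_set_prefixes)
  hence "finite (sq ` {N..})" using finite_subset by blast
  moreover have "infinite (sq ` {N..})"
    using inj infinite_Ici by (simp add: finite_image_iff inj_on_subset)
  ultimately show False by simp
qed

theorem lemma4p12:
  shows "\<forall>T\<in>Sacks. \<exists>\<rho>. is_weight T \<rho> \<and> (\<forall>S. is_tree S \<and> le_rho \<rho> S T \<longrightarrow> S \<in> Sacks)"
proof
  fix T assume "T \<in> Sacks"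
  hence pT: "perfect_tree T" by (simp add: Sacks_def)
  define \<rho> where "\<rho> = (\<lambda>s t. if (\<exists>u\<in>T. prefix s u \<and> incomparable u t)
      then {SOME u. u\<in>T \<and> prefix s u \<and> incomparable u t} else {})"
  have rho_good: "\<exists>v\<in>\<rho> s t. v \<in> T \<and> prefix s v \<and> incomparable v t"
    if "\<exists>u\<in>T. prefix s u \<and> incomparable u t" for s t
  proof -
    have "(SOME u. u\<in>T \<and> prefix s u \<and> incomparable u t) \<in> T \<and>
       prefix s (SOME u. u\<in>T \<and> prefix s u \<and> incomparable u t) \<and>
       incomparable (SOME u. u\<in>T \<and> prefix s u \<and> incomparable u t) t"
      using someI_ex[where P="\<lambda>u. u\<in>T \<and> prefix s u \<and> incomparable u t"] that by blast
    then show ?thesis using that unfolding \<rho>_def by auto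
  qed
  have w: "is_weight T \<rho>"
    unfolding is_weight_def
  proof (intro ballI conjI)
    fix s t assume "s \<in> T" "t \<in> T"
    show "finite (\<rho> s t)" unfolding \<rho>_def by simp
    show "\<rho> s t \<subseteq> restr T s - restr T t"
    proof
      fix v assume "v \<in> \<rho> s t"
      then have "\<exists>u\<in>T. prefix s u \<and> incomparable u t" and
        "v = (SOME u. u\<in>T \<and> prefix s u \<and> incomparable u t)"
        unfolding \<rho>_def by (auto split: if_splits)
      then have "v \<in> T \<and> prefix s v \<and> incomparable v t"
        using someI_ex[where P="\<lambda>u. u\<in>T \<and> prefix s u \<and> incomparable u t"] by blast
      then show "v \<in> restr T s - restr T t"
        unfolding restr_def incomparable_def by auto
    qed
  qed
  show "\<exists>\<rho>. is_weight T \<rho> \<and> (\<forall>S. is_tree S \<and> le_rho \<rho> S T \<longrightarrow> S \<in> Sacks)"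
  proof (intro exI conjI allI impI)
    show "is_weight T \<rho>" by (rule w)
    fix S assume A: "is_tree S \<and> le_rho \<rho> S T"
    hence tS: "is_tree S" and sub: "S \<subseteq> T" and dense: "dense_in (good_nodes \<rho> S) S"
      by (auto simp: le_rho_def)
    have split0: "\<exists>t\<in>S. \<exists>u\<in>S. prefix s0 t \<and> prefix s0 u \<and> incomparable t u"
      if s0g: "s0 \<in> good_nodes \<rho> S" for s0
    proof (rule ccontr)
      assume NX: "\<not> (\<exists>t\<in>S. \<exists>u\<in>S. prefix s0 t \<and> prefix s0 u \<and> incomparable t u)"
      from s0g obtain sq :: "nat \<Rightarrow> bool list" where inj: "inj sq" and sq0: "sq 0 = s0"
        and inr: "\<forall>n. sq n \<in> restr S s0" and rs: "\<forall>n. \<rho> (sq n) (sq (Suc n)) \<subseteq> S"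
        unfolding good_nodes_def by blast
      have inS: "sq n \<in> S" for n using inr by (auto simp: restr_def)
      have "finite (sq -` set (prefixes s0))"
        using inj by (simp add: finite_vimageI)
      hence "finite {n. prefix (sq n) s0}" by (simp add: in_set_prefixes vimage_def)
      then obtain N where N: "\<forall>n\<in>{n. prefix (sq n) s0}. n < N"
        using finite_nat_set_iff_bounded by blast
      have ext: "prefix s0 (sq n)" if "n \<ge> N" for n
        using N inr that by (auto simp: restr_def)
      have "sq N \<in> T" using inS sub by blast
      then obtain t1 t2 where T1: "t1 \<in> T" and T2: "t2 \<in> T" and a1: "prefix (sq N) t1"
        and a2: "prefix (sq N) t2" and inc: "incomparable t1 t2"
        using pT unfolding perfect_tree_def by blast
      show False
      proof (rule chain_finite[OF inj a1 a2 inc T1 T2])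
        fix n assume nN: "n \<ge> N"
        have ey: "prefix s0 (sq n)" using ext nN by simp
        have ex: "prefix s0 (sq (Suc n))" using ext nN by simp
        have cmp: "\<not> incomparable (sq n) (sq (Suc n))"
          using NX ey ex inS by blast
        show "prefix (sq (Suc n)) (sq n) \<or>
          (prefix (sq n) (sq (Suc n)) \<and> (\<forall>u\<in>T. prefix (sq n) u \<longrightarrow> \<not> incomparable u (sq (Suc n))))"
        proof (cases "prefix (sq (Suc n)) (sq n)")
          case True then show ?thesis by simp
        next
          case False
          hence p: "prefix (sq n) (sq (Suc n))" using cmp by (simp add: incomparable_def)
          have "\<forall>u\<in>T. prefix (sq n) u \<longrightarrow> \<not> incomparable u (sq (Suc n))"
          proof (intro ballI impI notI)
            fix u assume "u \<in> T" "prefix (sq n) u" "incomparable u (sq (Suc n))"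
            then obtain v where v: "v \<in> \<rho> (sq n) (sq (Suc n))" "prefix (sq n) v"
              "incomparable v (sq (Suc n))"
              using rho_good[of "sq n" "sq (Suc n)"] by blast
            have "v \<in> S" using v(1) rs by blast
            moreover have "prefix s0 v" using ey v(2) by (meson prefix_order.trans)
            ultimately show False using NX ex inS v(3) by blast
          qed
          then show ?thesis using p by simp
        qed
      qed
    qed
    have "perfect_tree S"
      unfolding perfect_tree_def
    proof (intro conjI ballI)
      show "is_tree S" by (rule tS)
      fix s assume "s \<in> S"
      then obtain s0 where s0: "s0 \<in> good_nodes \<rho> S" "prefix s s0"
        using dense unfolding dense_in_def by blast
      from split0[OF s0(1)] obtain t u where "t \<in> S" "u \<in> S" "prefix s0 t" "prefix s0 u"
        "incomparable t u" by blast
      then show "\<exists>t\<in>S. \<exists>u\<in>S. prefix s t \<and> prefix s u \<and> incomparable t u"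
        using s0(2) by (meson prefix_order.trans)
    qed
    then show "S \<in> Sacks" by (simp add: Sacks_def)
  qed
qed

end
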